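(* Let $H$ be a Hopf algebra over a field $k$, $(d,\Omega)$ a left-covariant FODC over $H$, and $X\in\Omega^\ast=\operatorname{Hom}_{-H}(\Omega,H)$ with $\rho(X)(a)=X(da)$. Consider the conditions (A) $\rho(X)=(I\otimes\varepsilon)\circ(I\otimes\rho(X))\circ\Delta$, i.e. $\rho(X)(a)=\sum a_1\,\varepsilon(\rho(X)(a_2))$ for all $a\in H$; (B) $\rho(X)\circ L=L\circ\rho(X)$ for every left translation $L$ of $H$. Then (A) implies (B). If moreover $\operatorname{Alg}(H,k)$ separates the elements of $H$ (for all $a\neq b$ in $H$ there is $\varphi\in\operatorname{Alg}(H,k)$ with $\varphi(a)\neq\varphi(b)$), then (B) implies (A), so (A) and (B) are equivalent.
   Context: A FODC over $H$ is a pair $(d,\Omega)$ with $\Omega$ an $H$-bimodule, $d\colon H\to\Omega$ a derivation, and $\Omega$ generated as bimodule by $d(H)$; left-covariant means there is $\Delta_l\colon\Omega\to H\otimes\Omega$ with $\Delta_l\circ d=(I\otimes d)\circ\Delta$ and $(\varepsilon\otimes I)\circ\Delta_l=I$. A left translation on $H$ is an algebra homomorphism $L\colon H\to H$ with $\Delta\circ L=(L\otimes I)\circ\Delta$; these are exactly the maps $(\varphi\otimes I)\circ\Delta$ with $\varphi\in\operatorname{Alg}(H,k)$, the unital algebra homomorphisms $H\to k$. *)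

theory Defs
  imports Main "HOL.Vector_Spaces"
begin

text \<open>Elements of tensor products are represented by finite formal sums of simple
tensors (lists of pairs / triples, i.e. Sweedler-type representations).  Two such
formal sums denote the same element of the tensor product over the field k iff they
agree under all products of k-linear functionals (over a field, elementary tensors
of functionals separate the points of the tensor product).\<close>

definition tensor_eq ::
  "('k::field \<Rightarrow> 'a::ab_group_add \<Rightarrow> 'a) \<Rightarrow> ('k \<Rightarrow> 'b::ab_group_add \<Rightarrow> 'b)
   \<Rightarrow> ('a \<times> 'b) list \<Rightarrow> ('a \<times> 'b) list \<Rightarrow> bool" where
  "tensor_eq sa sb xs ys \<longleftrightarrow>
     (\<forall>f g. Vector_Spaces.linear sa (*) f \<and> Vector_Spaces.linear sb (*) g \<longrightarrow>
        sum_list (map (\<lambda>(x, y). f x * g y) xs) = sum_list (map (\<lambda>(x, y). f x * g y) ys))"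

definition tensor_eq3 ::
  "('k::field \<Rightarrow> 'a::ab_group_add \<Rightarrow> 'a) \<Rightarrow> ('k \<Rightarrow> 'b::ab_group_add \<Rightarrow> 'b)
   \<Rightarrow> ('k \<Rightarrow> 'c::ab_group_add \<Rightarrow> 'c)
   \<Rightarrow> ('a \<times> 'b \<times> 'c) list \<Rightarrow> ('a \<times> 'b \<times> 'c) list \<Rightarrow> bool" where
  "tensor_eq3 sa sb sc xs ys \<longleftrightarrow>
     (\<forall>f g h. Vector_Spaces.linear sa (*) f \<and> Vector_Spaces.linear sb (*) g
          \<and> Vector_Spaces.linear sc (*) h \<longrightarrow>
        sum_list (map (\<lambda>(x, y, z). f x * g y * h z) xs)
        = sum_list (map (\<lambda>(x, y, z). f x * g y * h z) ys))"

definition k_algebra :: "('k::field \<Rightarrow> 'h::ring_1 \<Rightarrow> 'h) \<Rightarrow> bool" where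
  "k_algebra sc \<longleftrightarrow> vector_space sc \<and>
     (\<forall>c a b. sc c (a * b) = sc c a * b \<and> sc c (a * b) = a * sc c b)"

definition hopf_algebra ::
  "('k::field \<Rightarrow> 'h::ring_1 \<Rightarrow> 'h) \<Rightarrow> ('h \<Rightarrow> ('h \<times> 'h) list) \<Rightarrow> ('h \<Rightarrow> 'k)
   \<Rightarrow> ('h \<Rightarrow> 'h) \<Rightarrow> bool" where
  "hopf_algebra sc Delta eps S \<longleftrightarrow>
     k_algebra sc \<and>
     \<comment> \<open>\<Delta> is a k-linear, unital algebra map H \<rightarrow> H \<otimes> H\<close>
     (\<forall>a b. tensor_eq sc sc (Delta (a + b)) (Delta a @ Delta b)) \<and>
     (\<forall>c a. tensor_eq sc sc (Delta (sc c a)) (map (\<lambda>(x, y). (sc c x, y)) (Delta a))) \<and>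
     (\<forall>a b. tensor_eq sc sc (Delta (a * b))
              (concat (map (\<lambda>(x, y). map (\<lambda>(x', y'). (x * x', y * y')) (Delta b)) (Delta a)))) \<and>
     tensor_eq sc sc (Delta 1) [(1, 1)] \<and>
     \<comment> \<open>coassociativity\<close>
     (\<forall>a. tensor_eq3 sc sc sc
            (concat (map (\<lambda>(x, y). map (\<lambda>(x1, x2). (x1, x2, y)) (Delta x)) (Delta a)))
            (concat (map (\<lambda>(x, y). map (\<lambda>(y1, y2). (x, y1, y2)) (Delta y)) (Delta a)))) \<and>
     \<comment> \<open>counit: a k-linear unital algebra map H \<rightarrow> k\<close>
     Vector_Spaces.linear sc (*) eps \<and> (\<forall>a b. eps (a * b) = eps a * eps b) \<and> eps 1 = 1 \<and>
     (\<forall>a. sum_list (map (\<lambda>(x, y). sc (eps x) y) (Delta a)) = a) \<and>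
     (\<forall>a. sum_list (map (\<lambda>(x, y). sc (eps y) x) (Delta a)) = a) \<and>
     \<comment> \<open>antipode\<close>
     Vector_Spaces.linear sc sc S \<and>
     (\<forall>a. sum_list (map (\<lambda>(x, y). S x * y) (Delta a)) = sc (eps a) 1) \<and>
     (\<forall>a. sum_list (map (\<lambda>(x, y). x * S y) (Delta a)) = sc (eps a) 1)"

definition bimodule ::
  "('k::field \<Rightarrow> 'h::ring_1 \<Rightarrow> 'h) \<Rightarrow> ('k \<Rightarrow> 'o::ab_group_add \<Rightarrow> 'o)
   \<Rightarrow> ('h \<Rightarrow> 'o \<Rightarrow> 'o) \<Rightarrow> ('o \<Rightarrow> 'h \<Rightarrow> 'o) \<Rightarrow> bool" where
  "bimodule sc so la ra \<longleftrightarrow>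
     vector_space so \<and>
     (\<forall>a. Vector_Spaces.linear so so (la a)) \<and> (\<forall>w. Vector_Spaces.linear sc so (\<lambda>a. la a w)) \<and>
     (\<forall>a. Vector_Spaces.linear so so (\<lambda>w. ra w a)) \<and> (\<forall>w. Vector_Spaces.linear sc so (ra w)) \<and>
     (\<forall>a b w. la (a * b) w = la a (la b w)) \<and> (\<forall>w. la 1 w = w) \<and>
     (\<forall>a b w. ra w (a * b) = ra (ra w a) b) \<and> (\<forall>w. ra w 1 = w) \<and>
     (\<forall>a b w. la a (ra w b) = ra (la a w) b)"

definition fodc ::
  "('k::field \<Rightarrow> 'h::ring_1 \<Rightarrow> 'h) \<Rightarrow> ('k \<Rightarrow> 'o::ab_group_add \<Rightarrow> 'o)
   \<Rightarrow> ('h \<Rightarrow> 'o \<Rightarrow> 'o) \<Rightarrow> ('o \<Rightarrow> 'h \<Rightarrow> 'o) \<Rightarrow> ('h \<Rightarrow> 'o) \<Rightarrow> bool" where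
  "fodc sc so la ra d \<longleftrightarrow>
     bimodule sc so la ra \<and>
     Vector_Spaces.linear sc so d \<and> (\<forall>a b. d (a * b) = ra (d a) b + la a (d b)) \<and>
     (\<forall>w. \<exists>ts. w = sum_list (map (\<lambda>(a, b, c). ra (la a (d b)) c) ts))"

definition left_covariant ::
  "('k::field \<Rightarrow> 'h::ring_1 \<Rightarrow> 'h) \<Rightarrow> ('k \<Rightarrow> 'o::ab_group_add \<Rightarrow> 'o)
   \<Rightarrow> ('h \<Rightarrow> ('h \<times> 'h) list) \<Rightarrow> ('h \<Rightarrow> 'k) \<Rightarrow> ('h \<Rightarrow> 'o)
   \<Rightarrow> ('o \<Rightarrow> ('h \<times> 'o) list) \<Rightarrow> bool" where
  "left_covariant sc so Delta eps d Dl \<longleftrightarrow>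
     (\<forall>w w'. tensor_eq sc so (Dl (w + w')) (Dl w @ Dl w')) \<and>
     (\<forall>c w. tensor_eq sc so (Dl (so c w)) (map (\<lambda>(x, y). (sc c x, y)) (Dl w))) \<and>
     (\<forall>a. tensor_eq sc so (Dl (d a)) (map (\<lambda>(x, y). (x, d y)) (Delta a))) \<and>
     (\<forall>w. sum_list (map (\<lambda>(x, y). so (eps x) y) (Dl w)) = w)"

definition right_module_hom ::
  "('k::field \<Rightarrow> 'h::ring_1 \<Rightarrow> 'h) \<Rightarrow> ('k \<Rightarrow> 'o::ab_group_add \<Rightarrow> 'o)
   \<Rightarrow> ('o \<Rightarrow> 'h \<Rightarrow> 'o) \<Rightarrow> ('o \<Rightarrow> 'h) \<Rightarrow> bool" where
  "right_module_hom sc so ra X \<longleftrightarrow>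
     Vector_Spaces.linear so sc X \<and> (\<forall>w a. X (ra w a) = X w * a)"

definition alg_hom_k :: "('k::field \<Rightarrow> 'h::ring_1 \<Rightarrow> 'h) \<Rightarrow> ('h \<Rightarrow> 'k) \<Rightarrow> bool" where
  "alg_hom_k sc phi \<longleftrightarrow>
     Vector_Spaces.linear sc (*) phi \<and> (\<forall>a b. phi (a * b) = phi a * phi b) \<and> phi 1 = 1"

definition left_translation ::
  "('k::field \<Rightarrow> 'h::ring_1 \<Rightarrow> 'h) \<Rightarrow> ('h \<Rightarrow> ('h \<times> 'h) list) \<Rightarrow> ('h \<Rightarrow> 'h) \<Rightarrow> bool" where
  "left_translation sc Delta L \<longleftrightarrow>
     Vector_Spaces.linear sc sc L \<and> (\<forall>a b. L (a * b) = L a * L b) \<and> L 1 = 1 \<and>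
     (\<forall>a. tensor_eq sc sc (Delta (L a)) (map (\<lambda>(x, y). (L x, y)) (Delta a)))"

end

theory Submission imports Defs begin

lemma lin_add: "Vector_Spaces.linear s1 s2 f \<Longrightarrow> f (x + y) = f x + f y"
  by (simp add: linear_iff)
lemma lin_scale: "Vector_Spaces.linear s1 s2 f \<Longrightarrow> f (s1 c x) = s2 c (f x)"
  by (simp add: linear_iff)
lemma lin_vs1: "Vector_Spaces.linear s1 s2 f \<Longrightarrow> vector_space s1"
  by (simp add: linear_iff)
lemma lin_vs2: "Vector_Spaces.linear s1 s2 f \<Longrightarrow> vector_space s2"
  by (simp add: linear_iff)
lemma lin_zero: "Vector_Spaces.linear s1 s2 f \<Longrightarrow> f 0 = 0"
  by (metis add_cancel_right_right lin_add)

lemma lin_sum_list: "Vector_Spaces.linear s1 s2 f \<Longrightarrow>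
   f (sum_list (map h l)) = sum_list (map (\<lambda>x. f (h x)) l)"
  by (induction l) (auto simp: lin_add lin_zero)

lemma vs_scale_sum_list: "vector_space s \<Longrightarrow>
   s c (sum_list (map h l)) = sum_list (map (\<lambda>x. s c (h x)) l)"
proof -
  assume "vector_space s"
  then interpret vector_space s .
  show ?thesis by (induction l) (auto simp: scale_right_distrib)
qed

lemma vs_field: "vector_space ((*) :: 'k::field \<Rightarrow> 'k \<Rightarrow> 'k)"
  by unfold_locales (auto simp: algebra_simps)

lemma sum_list_concat_map: "sum_list (map F (concat xss)) = sum_list (map (\<lambda>xs. sum_list (map F xs)) xss)"
  by (induction xss) auto

lemma separate:
  assumes vs: "vector_space s" and h: "\<And>f. Vector_Spaces.linear s (*) f \<Longrightarrow> f u = f v"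
  shows "u = v"
proof (rule ccontr)
  assume ne: "u \<noteq> v"
  interpret vector_space_pair s "(*) :: 'a \<Rightarrow> 'a \<Rightarrow> 'a"
    using vs vs_field by (simp add: vector_space_pair_def)
  have "vs1.independent {u - v}" using ne by simp
  then obtain g where g: "Vector_Spaces.linear s (*) g" "g (u - v) = 1"
    using linear_independent_extend[of "{u - v}" "\<lambda>_. 1"] by auto
  have "g (u - v) = g u - g v"
    using g(1) by (metis add_diff_cancel diff_add_cancel lin_add)
  with h[OF g(1)] g(2) show False by simp
qed

lemma tensor_T1:
  assumes "tensor_eq sa sb xs ys" "vector_space sa" "Vector_Spaces.linear sb (*) g"
  shows "sum_list (map (\<lambda>(x, y). sa (g y) x) xs) = sum_list (map (\<lambda>(x, y). sa (g y) x) ys)"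
proof (rule separate[OF assms(2)])
  fix f assume f: "Vector_Spaces.linear sa (*) f"
  have e: "\<And>zs. f (sum_list (map (\<lambda>(x, y). sa (g y) x) zs)) = sum_list (map (\<lambda>(x, y). f x * g y) zs)"
    by (simp add: lin_sum_list[OF f] lin_scale[OF f] split_def mult.commute)
  show "f (sum_list (map (\<lambda>(x, y). sa (g y) x) xs)) = f (sum_list (map (\<lambda>(x, y). sa (g y) x) ys))"
    unfolding e using assms(1) f assms(3) unfolding tensor_eq_def by blast
qed

lemma tensor_T2:
  assumes "tensor_eq sa sb xs ys" "vector_space sb" "Vector_Spaces.linear sa (*) g"
  shows "sum_list (map (\<lambda>(x, y). sb (g x) y) xs) = sum_list (map (\<lambda>(x, y). sb (g x) y) ys)"
proof (rule separate[OF assms(2)])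
  fix f assume f: "Vector_Spaces.linear sb (*) f"
  have e: "\<And>zs. f (sum_list (map (\<lambda>(x, y). sb (g x) y) zs)) = sum_list (map (\<lambda>(x, y). g x * f y) zs)"
    by (simp add: lin_sum_list[OF f] lin_scale[OF f] split_def)
  show "f (sum_list (map (\<lambda>(x, y). sb (g x) y) xs)) = f (sum_list (map (\<lambda>(x, y). sb (g x) y) ys))"
    unfolding e using assms(1) f assms(3) unfolding tensor_eq_def by blast
qed

lemma phi_translation:
  fixes sc :: "'k::field \<Rightarrow> 'h::ring_1 \<Rightarrow> 'h"
  assumes H: "hopf_algebra sc Delta eps S" and P: "alg_hom_k sc phi"
  shows "left_translation sc Delta (\<lambda>u. sum_list (map (\<lambda>(x, y). sc (phi x) y) (Delta u)))"
proof -
  define L where "L = (\<lambda>u. sum_list (map (\<lambda>(x, y). sc (phi x) y) (Delta u)))"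
  have VS: "vector_space sc" and KA0: "\<forall>c a b. sc c (a * b) = sc c a * b \<and> sc c (a * b) = a * sc c b"
    using H unfolding hopf_algebra_def k_algebra_def by blast+
  have KA: "\<And>c a b. sc c (a * b) = sc c a * b" "\<And>c a b. sc c (a * b) = a * sc c b"
    using KA0 by blast+
  have DA: "\<And>a b. tensor_eq sc sc (Delta (a + b)) (Delta a @ Delta b)"
   and DS: "\<And>c a. tensor_eq sc sc (Delta (sc c a)) (map (\<lambda>(x, y). (sc c x, y)) (Delta a))"
   and DM: "\<And>a b. tensor_eq sc sc (Delta (a * b))
              (concat (map (\<lambda>(x, y). map (\<lambda>(x', y'). (x * x', y * y')) (Delta b)) (Delta a)))"
   and D1: "tensor_eq sc sc (Delta 1) [(1, 1)]"
   and CA: "\<And>a. tensor_eq3 sc sc sc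
            (concat (map (\<lambda>(x, y). map (\<lambda>(x1, x2). (x1, x2, y)) (Delta x)) (Delta a)))
            (concat (map (\<lambda>(x, y). map (\<lambda>(y1, y2). (x, y1, y2)) (Delta y)) (Delta a)))"
    using H unfolding hopf_algebra_def by auto
  have PL: "Vector_Spaces.linear sc (*) phi" and PM: "\<And>a b. phi (a * b) = phi a * phi b"
    and P1: "phi 1 = 1"
    using P unfolding alg_hom_k_def by auto
  have ssc: "\<And>c c' x. sc c (sc c' x) = sc (c * c') x"
    using VS by (simp add: vector_space.vector_space_assms(3))
  have lin: "Vector_Spaces.linear sc sc L"
    unfolding linear_iff
  proof (intro conjI allI)
    show "vector_space sc" by fact
    show "vector_space sc" by fact
    fix u v
    show "L (u + v) = L u + L v"
      unfolding L_def tensor_T2[OF DA VS PL] by simp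
  next
    fix c u
    have "L (sc c u) = sum_list (map (\<lambda>(x, y). sc (phi (sc c x)) y) (Delta u))"
      unfolding L_def tensor_T2[OF DS VS PL] by (simp add: split_def o_def)
    also have "\<dots> = sum_list (map (\<lambda>(x, y). sc c (sc (phi x) y)) (Delta u))"
      by (simp add: lin_scale[OF PL] ssc)
    also have "\<dots> = sc c (L u)"
      unfolding L_def vs_scale_sum_list[OF VS] by (simp add: split_def)
    finally show "L (sc c u) = sc c (L u)" .
  qed
  have scm: "sc c y * sc c' y' = sc (c * c') (y * y')" for c c' y y'
    by (metis KA ssc)
  have mult: "L (a * b) = L a * L b" for a b
  proof -
    have "L (a * b) = sum_list (map (\<lambda>(x, y). sum_list (map (\<lambda>(x', y'). sc (phi x) y * sc (phi x') y') (Delta b))) (Delta a))"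
      unfolding L_def tensor_T2[OF DM VS PL] sum_list_concat_map
      by (simp add: split_def o_def PM scm)
    also have "\<dots> = sum_list (map (\<lambda>(x, y). sc (phi x) y * L b) (Delta a))"
      unfolding L_def by (simp add: split_def sum_list_const_mult[symmetric])
    also have "\<dots> = L a * L b"
      by (simp add: L_def split_def sum_list_mult_const)
    finally show ?thesis .
  qed
  have one: "L 1 = 1"
    unfolding L_def tensor_T2[OF D1 VS PL] using P1 VS by (simp add: vector_space.vector_space_assms(4))
  have comp: "tensor_eq sc sc (Delta (L a)) (map (\<lambda>(x, y). (L x, y)) (Delta a))" for a
    unfolding tensor_eq_def
  proof (intro allI impI, elim conjE)
    fix f g assume f: "Vector_Spaces.linear sc (*) f" and g: "Vector_Spaces.linear sc (*) g"
    define T where "T u = sum_list (map (\<lambda>(x, y). f x * g y) (Delta u))" for u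
    have TL: "Vector_Spaces.linear sc (*) T"
      unfolding linear_iff
    proof (intro conjI allI)
      show "vector_space sc" by fact
      show "vector_space (*)" by (rule vs_field)
      fix u v show "T (u + v) = T u + T v"
        using DA[of u v] f g unfolding tensor_eq_def T_def by auto
    next
      fix c u
      have "T (sc c u) = sum_list (map (\<lambda>(x, y). f (sc c x) * g y) (Delta u))"
        using DS[of c u] f g unfolding tensor_eq_def T_def by (auto simp: split_def o_def)
      also have "\<dots> = c * T u"
        unfolding T_def by (simp add: lin_scale[OF f] split_def sum_list_const_mult[symmetric] mult.assoc)
      finally show "T (sc c u) = c * T u" .
    qed
    have "sum_list (map (\<lambda>(x, y). f x * g y) (Delta (L a))) = T (L a)" by (simp add: T_def)
    also have "\<dots> = sum_list (map (\<lambda>(x, y). phi x * T y) (Delta a))"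
      unfolding L_def lin_sum_list[OF TL] by (simp add: split_def lin_scale[OF TL])
    also have "\<dots> = sum_list (map (\<lambda>(x, y, z). phi x * f y * g z)
            (concat (map (\<lambda>(x, y). map (\<lambda>(y1, y2). (x, y1, y2)) (Delta y)) (Delta a))))"
      unfolding T_def sum_list_concat_map
      by (simp add: split_def o_def sum_list_const_mult[symmetric] mult.assoc)
    also have "\<dots> = sum_list (map (\<lambda>(x, y, z). phi x * f y * g z)
            (concat (map (\<lambda>(x, y). map (\<lambda>(x1, x2). (x1, x2, y)) (Delta x)) (Delta a))))"
      using CA[of a] PL f g unfolding tensor_eq3_def by metis
    also have "\<dots> = sum_list (map (\<lambda>(x, y). f (L x) * g y) (Delta a))"
      unfolding sum_list_concat_map L_def lin_sum_list[OF f]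
      by (simp add: split_def o_def sum_list_mult_const lin_scale[OF f])
    finally show "sum_list (map (\<lambda>(x, y). f x * g y) (Delta (L a))) =
          sum_list (map (\<lambda>(x, y). f x * g y) (map (\<lambda>(x, y). (L x, y)) (Delta a)))"
      by (simp add: split_def o_def)
  qed
  show ?thesis
    unfolding L_def[symmetric] left_translation_def using lin mult one comp by blast
qed

theorem mainTheorem11:
  fixes sc :: "'k::field \<Rightarrow> 'h::ring_1 \<Rightarrow> 'h"
    and Delta :: "'h \<Rightarrow> ('h \<times> 'h) list" and eps :: "'h \<Rightarrow> 'k" and S :: "'h \<Rightarrow> 'h"
    and so :: "'k \<Rightarrow> 'o::ab_group_add \<Rightarrow> 'o"
    and la :: "'h \<Rightarrow> 'o \<Rightarrow> 'o" and ra :: "'o \<Rightarrow> 'h \<Rightarrow> 'o"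
    and d :: "'h \<Rightarrow> 'o" and Dl :: "'o \<Rightarrow> ('h \<times> 'o) list"
    and X :: "'o \<Rightarrow> 'h"
  assumes "hopf_algebra sc Delta eps S"
    and "fodc sc so la ra d"
    and "left_covariant sc so Delta eps d Dl"
    and "right_module_hom sc so ra X"
  defines "rhoX \<equiv> (\<lambda>a. X (d a))"
  defines "condA \<equiv> (\<forall>a. rhoX a = sum_list (map (\<lambda>(x, y). sc (eps (rhoX y)) x) (Delta a)))"
  defines "condB \<equiv> (\<forall>L. left_translation sc Delta L \<longrightarrow> (\<forall>a. rhoX (L a) = L (rhoX a)))"
  shows "(condA \<longrightarrow> condB) \<and>
         ((\<forall>a b. a \<noteq> b \<longrightarrow> (\<exists>phi. alg_hom_k sc phi \<and> phi a \<noteq> phi b)) \<longrightarrow> (condA \<longleftrightarrow> condB))"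
proof -
  have VS: "vector_space sc" using assms(1) unfolding hopf_algebra_def k_algebra_def by blast
  have EL: "Vector_Spaces.linear sc (*) eps" using assms(1) unfolding hopf_algebra_def by blast
  have CU1: "\<And>a. sum_list (map (\<lambda>(x, y). sc (eps x) y) (Delta a)) = a"
    and CU2: "\<And>a. sum_list (map (\<lambda>(x, y). sc (eps y) x) (Delta a)) = a"
    using assms(1) unfolding hopf_algebra_def by blast+
  have DL: "Vector_Spaces.linear sc so d" using assms(2) unfolding fodc_def by blast
  have XL: "Vector_Spaces.linear so sc X" using assms(4) unfolding right_module_hom_def by blast
  have RL: "Vector_Spaces.linear sc sc rhoX"
    using Vector_Spaces.linear_compose[OF DL XL] unfolding rhoX_def o_def .
  have PsL: "Vector_Spaces.linear sc (*) (\<lambda>y. eps (rhoX y))"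
    using Vector_Spaces.linear_compose[OF RL EL] unfolding o_def .
  have AB: "condB" if A: "condA"
    unfolding condB_def
  proof (intro allI impI)
    fix L a assume LT: "left_translation sc Delta L"
    have LL: "Vector_Spaces.linear sc sc L"
      and LD: "tensor_eq sc sc (Delta (L a)) (map (\<lambda>(x, y). (L x, y)) (Delta a))"
      using LT unfolding left_translation_def by blast+
    have "rhoX (L a) = sum_list (map (\<lambda>(x, y). sc (eps (rhoX y)) x) (Delta (L a)))"
      using A unfolding condA_def by blast
    also have "\<dots> = sum_list (map (\<lambda>(x, y). sc (eps (rhoX y)) x) (map (\<lambda>(x, y). (L x, y)) (Delta a)))"
      by (rule tensor_T1[OF LD VS PsL])
    also have "\<dots> = L (sum_list (map (\<lambda>(x, y). sc (eps (rhoX y)) x) (Delta a)))"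
      by (simp add: lin_sum_list[OF LL] lin_scale[OF LL] split_def o_def)
    also have "\<dots> = L (rhoX a)"
      using A unfolding condA_def by metis
    finally show "rhoX (L a) = L (rhoX a)" .
  qed
  have BA: "condA" if B: "condB" and SEP: "\<forall>a b. a \<noteq> b \<longrightarrow> (\<exists>phi. alg_hom_k sc phi \<and> phi a \<noteq> phi b)"
    unfolding condA_def
  proof (rule allI, rule ccontr)
    fix a
    let ?R = "sum_list (map (\<lambda>(x, y). sc (eps (rhoX y)) x) (Delta a))"
    assume "rhoX a \<noteq> ?R"
    then obtain phi where P: "alg_hom_k sc phi" and ne: "phi (rhoX a) \<noteq> phi ?R"
      using SEP by blast
    have PL: "Vector_Spaces.linear sc (*) phi" using P unfolding alg_hom_k_def by blast
    define L where "L = (\<lambda>u. sum_list (map (\<lambda>(x, y). sc (phi x) y) (Delta u)))"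
    have LT: "left_translation sc Delta L"
      unfolding L_def by (rule phi_translation[OF assms(1) P])
    have eL: "eps (L u) = phi u" for u
    proof -
      have "eps (L u) = sum_list (map (\<lambda>(x, y). phi x * eps y) (Delta u))"
        unfolding L_def by (simp add: lin_sum_list[OF EL] lin_scale[OF EL] split_def)
      also have "\<dots> = phi (sum_list (map (\<lambda>(x, y). sc (eps y) x) (Delta u)))"
        by (simp add: lin_sum_list[OF PL] lin_scale[OF PL] split_def mult.commute)
      finally show ?thesis using CU2 by simp
    qed
    have "phi (rhoX a) = eps (L (rhoX a))" by (simp add: eL)
    also have "\<dots> = eps (rhoX (L a))"
      using B LT unfolding condB_def by metis
    also have "\<dots> = sum_list (map (\<lambda>(x, y). phi x * eps (rhoX y)) (Delta a))"
      unfolding L_def by (simp add: lin_sum_list[OF PsL] lin_scale[OF PsL] split_def)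
    also have "\<dots> = phi ?R"
      by (simp add: lin_sum_list[OF PL] lin_scale[OF PL] split_def mult.commute)
    finally show False using ne by simp
  qed
  show ?thesis using AB BA by blast
qed

end
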